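(* Let $P$ be a Markov kernel on a measurable space $(\mathsf{X},\mathcal{X})$. Suppose there exist $C\in\mathcal{X}$, $\epsilon>0$ and a probability measure $\nu$ with $P(x,\cdot)\ge\epsilon\nu(\cdot)$ for all $x\in C$, and let $Q$ be the residual kernel ($Q(x,A)=(1-\epsilon)^{-1}(P(x,A)-\epsilon\nu(A))$ if $0<\epsilon<1$, $Q=\nu$ if $\epsilon=1$). Suppose further that there exist a function $W_0:\mathsf{X}\to[1,\infty)$, a function $\phi_0\in\mathcal{C}$ and a constant $b_0$ such that $PW_0\leq W_0-\phi_0\circ W_0+b_0\mathbb{1}_C$. Let $d_0=\inf_{x\notin C}W_0(x)$. Define the kernel $\check P$ on $\mathsf{X}\times\mathsf{X}$ by $$\check P(x,x';A\times A')=P(x,A)P(x',A')\mathbb{1}_{(C\times C)^c}(x,x')+Q(x,A)Q(x',A')\mathbb{1}_{C\times C}(x,x').$$ If $\phi_0(d_0)>b_0$, then, with $W(x,x')=W_0(x)+W_0(x')-1$ and $\phi=\lambda\phi_0$ for any $\lambda$ with $0<\lambda<1-b_0/\phi_0(d_0)$, one has $\check PW(x,x')\leq W(x,x')-\phi(W(x,x'))$ for all $(x,x')\notin C\times C$, and $$\sup_{C\times C}\check PW\leq 2(1-\epsilon)^{-1}\Big\{\sup_C PW_0-\epsilon\nu(W_0)\Big\}-1.$$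
   Context: $\mathcal{C}$ is the set of functions $\phi:[1,\infty)\to\mathbb{R}^+$ that are concave and differentiable with $\phi(1)>0$, $\lim_{v\to\infty}\phi(v)=\infty$ and $\lim_{v\to\infty}\phi'(v)=0$. $\nu(W_0)=\int W_0\,d\nu$. *)

theory Defs
  imports "HOL-Probability.Probability"
begin

definition classC :: "(real \<Rightarrow> real) \<Rightarrow> bool" where
  "classC \<phi> \<longleftrightarrow>
     (\<forall>v\<ge>1. \<phi> v > 0) \<and>
     concave_on {1..} \<phi> \<and>
     (\<forall>v\<ge>1. \<phi> differentiable (at v within {1..})) \<and>
     \<phi> 1 > 0 \<and>
     filterlim \<phi> at_top at_top \<and>
     ((\<lambda>v. deriv \<phi> v) \<longlongrightarrow> 0) at_top"

text \<open>Residual kernel Q: Q(x,A) = (P(x,A) - eps nu(A)) / (1 - eps) if eps < 1, and Q = nu if eps = 1.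
  (Only meaningful, and only used, for x in the small set C.)\<close>
definition residual ::
  "'a measure \<Rightarrow> ('a \<Rightarrow> 'a measure) \<Rightarrow> 'a measure \<Rightarrow> real \<Rightarrow> 'a \<Rightarrow> 'a measure" where
  "residual M P \<nu> \<epsilon> x =
     (if \<epsilon> = 1 then \<nu>
      else measure_of (space M) (sets M)
             (\<lambda>A. ennreal ((measure (P x) A - \<epsilon> * measure \<nu> A) / (1 - \<epsilon>))))"

definition coupling_kernel ::
  "'a measure \<Rightarrow> ('a \<Rightarrow> 'a measure) \<Rightarrow> 'a measure \<Rightarrow> real \<Rightarrow> 'a set \<Rightarrow> 'a \<times> 'a \<Rightarrow> ('a \<times> 'a) measure" where
  "coupling_kernel M P \<nu> \<epsilon> C = (\<lambda>(x, x').
     if x \<in> C \<and> x' \<in> C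
     then residual M P \<nu> \<epsilon> x \<Otimes>\<^sub>M residual M P \<nu> \<epsilon> x'
     else P x \<Otimes>\<^sub>M P x')"

end

theory Submission imports Defs begin

lemma concave_mono:
  fixes \<phi> :: "real \<Rightarrow> real"
  assumes cc: "concave_on {1..} \<phi>" and lim: "filterlim \<phi> at_top at_top"
    and u: "1 \<le> u" and uv: "u \<le> v"
  shows "\<phi> u \<le> \<phi> v"
proof (rule ccontr)
  assume "\<not> ?thesis"
  hence gt: "\<phi> v < \<phi> u" by simp
  hence "u < v" using uv by (cases "u = v") auto
  have "eventually (\<lambda>w. \<phi> v + 1 \<le> \<phi> w) at_top"
    using lim by (simp add: filterlim_at_top)
  then obtain N where N: "\<And>w. w \<ge> N \<Longrightarrow> \<phi> v + 1 \<le> \<phi> w"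
    by (auto simp: eventually_at_top_linorder)
  define w where "w = max N (v + 1)"
  have wv: "w > v" "\<phi> v + 1 \<le> \<phi> w" using N by (auto simp: w_def)
  define t where "t = (v - u) / (w - u)"
  have t01: "0 < t" "t < 1" using \<open>u < v\<close> wv by (auto simp: t_def field_simps)
  have tw: "t * (w - u) = v - u" using \<open>u < v\<close> wv by (simp add: t_def)
  have veq: "(1 - t) *\<^sub>R u + t *\<^sub>R w = v" using tw by (simp add: algebra_simps)
  have "(1 - t) * \<phi> u + t * \<phi> w \<le> \<phi> ((1 - t) *\<^sub>R u + t *\<^sub>R w)"
    using concave_onD[OF cc, of t u w] t01 u wv uv by auto
  hence "(1 - t) * \<phi> u + t * \<phi> w \<le> \<phi> v" using veq by simp
  moreover have "(1 - t) * \<phi> v < (1 - t) * \<phi> u" using gt t01 by simp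
  moreover have "t * \<phi> v < t * \<phi> w" using wv t01 by simp
  ultimately show False by (simp add: algebra_simps)
qed

lemma concave_subadd:
  fixes \<phi> :: "real \<Rightarrow> real"
  assumes cc: "concave_on {1..} \<phi>" and a: "1 \<le> a" and b: "1 \<le> b"
  shows "\<phi> (a + b - 1) + \<phi> 1 \<le> \<phi> a + \<phi> b"
proof (cases "a + b = 2")
  case True
  hence "a = 1" "b = 1" using a b by auto
  thus ?thesis by simp
next
  case False
  hence pos: "a + b - 2 > 0" using a b by auto
  define t where "t = (a - 1) / (a + b - 2)"
  have t01: "0 \<le> t" "t \<le> 1" using a b pos by (auto simp: t_def field_simps)
  have ta: "t * (a + b - 2) = a - 1" using pos by (simp add: t_def)
  have e1: "(1 - t) *\<^sub>R 1 + t *\<^sub>R (a + b - 1) = a" using ta by (simp add: algebra_simps)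
  have e2: "(1 - (1 - t)) *\<^sub>R 1 + (1 - t) *\<^sub>R (a + b - 1) = b" using ta by (simp add: algebra_simps)
  have "(1 - t) * \<phi> 1 + t * \<phi> (a + b - 1) \<le> \<phi> a"
    using concave_onD[OF cc, of t 1 "a + b - 1"] t01 a b e1 by auto
  moreover have "(1 - (1 - t)) * \<phi> 1 + (1 - t) * \<phi> (a + b - 1) \<le> \<phi> b"
    using concave_onD[OF cc, of "1 - t" 1 "a + b - 1"] t01 a b e2 by auto
  ultimately show ?thesis by (simp add: algebra_simps)
qed

lemma prod_integral:
  fixes W0 :: "'a \<Rightarrow> real"
  assumes N1: "prob_space N1" "sets N1 = sets M" and N2: "prob_space N2" "sets N2 = sets M"
    and Wm: "W0 \<in> borel_measurable M" and W1: "\<forall>x\<in>space M. W0 x \<ge> 1"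
  shows "(\<integral>\<^sup>+ z. ennreal (W0 (fst z) + W0 (snd z) - 1) \<partial>(N1 \<Otimes>\<^sub>M N2)) + 1
        = (\<integral>\<^sup>+ u. ennreal (W0 u) \<partial>N1) + (\<integral>\<^sup>+ u. ennreal (W0 u) \<partial>N2)"
proof -
  interpret p1: prob_space N1 by fact
  interpret p2: prob_space N2 by fact
  interpret pair_sigma_finite N1 N2 by unfold_locales
  have sp1: "space N1 = space M" and sp2: "space N2 = space M"
    using N1 N2 sets_eq_imp_space_eq by blast+
  have W1m: "W0 \<in> borel_measurable N1" using Wm measurable_cong_sets[OF N1(2) refl] by blast
  have W2m: "W0 \<in> borel_measurable N2" using Wm measurable_cong_sets[OF N2(2) refl] by blast
  have fm: "(\<lambda>z. ennreal (W0 (fst z) + W0 (snd z) - 1)) \<in> borel_measurable (N1 \<Otimes>\<^sub>M N2)"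
    using W1m W2m by measurable
  define I2 where "I2 = (\<integral>\<^sup>+ u. ennreal (W0 u) \<partial>N2)"
  have inner: "(\<integral>\<^sup>+ y. ennreal (W0 x + W0 y - 1) \<partial>N2) = ennreal (W0 x - 1) + I2"
    if x: "x \<in> space N1" for x
  proof -
    have "(\<integral>\<^sup>+ y. ennreal (W0 x + W0 y - 1) \<partial>N2) = (\<integral>\<^sup>+ y. ennreal (W0 x - 1) + ennreal (W0 y) \<partial>N2)"
      apply (rule nn_integral_cong)
      using x W1 sp1 sp2 by (subst ennreal_plus[symmetric]) (auto simp: algebra_simps)
    also have "\<dots> = ennreal (W0 x - 1) + I2"
      using W2m by (simp add: nn_integral_add I2_def p2.emeasure_space_1)
    finally show ?thesis .
  qed
  have "(\<integral>\<^sup>+ z. ennreal (W0 (fst z) + W0 (snd z) - 1) \<partial>(N1 \<Otimes>\<^sub>M N2))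
      = (\<integral>\<^sup>+ x. \<integral>\<^sup>+ y. ennreal (W0 x + W0 y - 1) \<partial>N2 \<partial>N1)"
    using p2.nn_integral_fst[OF fm] by simp
  also have "\<dots> = (\<integral>\<^sup>+ x. ennreal (W0 x - 1) + I2 \<partial>N1)"
    by (rule nn_integral_cong) (simp add: inner)
  also have "\<dots> = (\<integral>\<^sup>+ x. ennreal (W0 x - 1) \<partial>N1) + I2"
    using W1m by (simp add: nn_integral_add p1.emeasure_space_1)
  finally have "(\<integral>\<^sup>+ z. ennreal (W0 (fst z) + W0 (snd z) - 1) \<partial>(N1 \<Otimes>\<^sub>M N2)) + 1
     = (\<integral>\<^sup>+ x. ennreal (W0 x - 1) \<partial>N1) + 1 + I2" by (simp add: algebra_simps)
  also have "(\<integral>\<^sup>+ x. ennreal (W0 x - 1) \<partial>N1) + 1 = (\<integral>\<^sup>+ x. ennreal (W0 x - 1) + 1 \<partial>N1)"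
    using W1m by (simp add: nn_integral_add p1.emeasure_space_1)
  also have "\<dots> = (\<integral>\<^sup>+ x. ennreal (W0 x) \<partial>N1)"
    apply (rule nn_integral_cong)
    using W1 sp1 by (subst ennreal_1[symmetric], subst ennreal_plus[symmetric]) auto
  finally show ?thesis by (simp add: I2_def)
qed


lemma mix_integral:
  fixes a b :: ennreal
  assumes sN: "sets N = sets M" and s1: "sets N1 = sets M" and s2: "sets N2 = sets M"
    and eq: "\<And>A. A \<in> sets M \<Longrightarrow> emeasure N A = a * emeasure N1 A + b * emeasure N2 A"
    and f: "f \<in> borel_measurable M"
  shows "integral\<^sup>N N f = a * integral\<^sup>N N1 f + b * integral\<^sup>N N2 f"
  using f
proof induct
  case (cong f g)
  have spN: "space N = space M" "space N1 = space M" "space N2 = space M"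
    using sN s1 s2 sets_eq_imp_space_eq by blast+
  have "integral\<^sup>N N f = integral\<^sup>N N g" "integral\<^sup>N N1 f = integral\<^sup>N N1 g" "integral\<^sup>N N2 f = integral\<^sup>N N2 g"
    using cong(3) spN by (auto intro!: nn_integral_cong)
  with cong(4) show ?case by simp
next
  case (set A)
  thus ?case using sN s1 s2 eq by simp
next
  case (mult u c)
  have m: "u \<in> borel_measurable N" "u \<in> borel_measurable N1" "u \<in> borel_measurable N2"
    using mult(2) measurable_cong_sets[OF sN refl] measurable_cong_sets[OF s1 refl]
      measurable_cong_sets[OF s2 refl] by blast+
  show ?case using mult(4) by (simp add: nn_integral_cmult m algebra_simps)
next
  case (add u v)
  have m: "u \<in> borel_measurable N" "u \<in> borel_measurable N1" "u \<in> borel_measurable N2"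
          "v \<in> borel_measurable N" "v \<in> borel_measurable N1" "v \<in> borel_measurable N2"
    using add(1,4) measurable_cong_sets[OF sN refl] measurable_cong_sets[OF s1 refl]
      measurable_cong_sets[OF s2 refl] by blast+
  show ?case using add(3,7) by (simp add: nn_integral_add m algebra_simps)
next
  case (seq U)
  have m: "U i \<in> borel_measurable N" "U i \<in> borel_measurable N1" "U i \<in> borel_measurable N2" for i
    using seq(1) measurable_cong_sets[OF sN refl] measurable_cong_sets[OF s1 refl]
      measurable_cong_sets[OF s2 refl] by blast+
  have I: "integral\<^sup>N K (SUP i. U i) = (SUP i. integral\<^sup>N K (U i))"
    if "\<And>i. U i \<in> borel_measurable K" for K
  proof -
    have "integral\<^sup>N K (SUP i. U i) = (\<integral>\<^sup>+ x. (SUP i. U i x) \<partial>K)"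
    proof -
      have "(SUP i. U i) = (\<lambda>x. SUP i. U i x)" by (rule ext) (simp only: SUP_apply)
      thus ?thesis by simp
    qed
    also have "\<dots> = (SUP i. integral\<^sup>N K (U i))"
      by (rule nn_integral_monotone_convergence_SUP[OF seq(4) that])
    finally show ?thesis .
  qed
  have inc: "incseq (\<lambda>i. c * integral\<^sup>N K (U i))" for c :: ennreal and K
    using seq(4) by (auto simp: incseq_def le_fun_def intro!: mult_left_mono nn_integral_mono)
  have "(SUP i. integral\<^sup>N N (U i)) = (SUP i. a * integral\<^sup>N N1 (U i) + b * integral\<^sup>N N2 (U i))"
    using seq(3) by simp
  also have "\<dots> = (SUP i. a * integral\<^sup>N N1 (U i)) + (SUP i. b * integral\<^sup>N N2 (U i))"
    by (rule ennreal_SUP_add[OF inc inc])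
  also have "\<dots> = a * (SUP i. integral\<^sup>N N1 (U i)) + b * (SUP i. integral\<^sup>N N2 (U i))"
    by (simp add: SUP_mult_left_ennreal)
  finally have "integral\<^sup>N N (SUP i. U i) = a * integral\<^sup>N N1 (SUP i. U i) + b * integral\<^sup>N N2 (SUP i. U i)"
    by (simp only: I[OF m(1)] I[OF m(2)] I[OF m(3)])
  thus ?case .
qed


lemma residual_props:
  assumes Px: "prob_space (P x)" "sets (P x) = sets M"
    and nu: "prob_space \<nu>" "sets \<nu> = sets M"
    and e: "0 < \<epsilon>" "\<epsilon> < 1"
    and minor: "\<forall>A\<in>sets M. emeasure (P x) A \<ge> ennreal \<epsilon> * emeasure \<nu> A"
  shows "sets (residual M P \<nu> \<epsilon> x) = sets M"
    and "prob_space (residual M P \<nu> \<epsilon> x)"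
    and "\<And>A. A \<in> sets M \<Longrightarrow> emeasure (P x) A
            = ennreal (1 - \<epsilon>) * emeasure (residual M P \<nu> \<epsilon> x) A + ennreal \<epsilon> * emeasure \<nu> A"
proof -
  interpret p: prob_space "P x" by fact
  interpret n: prob_space \<nu> by fact
  define \<mu> where "\<mu> = (\<lambda>A. ennreal ((measure (P x) A - \<epsilon> * measure \<nu> A) / (1 - \<epsilon>)))"
  have Q: "residual M P \<nu> \<epsilon> x = measure_of (space M) (sets M) \<mu>"
    using e by (simp add: residual_def \<mu>_def)
  have ge: "\<epsilon> * measure \<nu> A \<le> measure (P x) A" if "A \<in> sets M" for A
  proof -
    have "ennreal (\<epsilon> * measure \<nu> A) \<le> ennreal (measure (P x) A)"
      using minor that e by (simp add: p.emeasure_eq_measure n.emeasure_eq_measure ennreal_mult)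
    thus ?thesis by (simp add: ennreal_le_iff)
  qed
  have ca: "countably_additive (sets M) \<mu>"
  proof (rule countably_additiveI)
    fix A :: "nat \<Rightarrow> _" assume A: "range A \<subseteq> sets M" "disjoint_family A"
    define r where "r = (\<lambda>i. (measure (P x) (A i) - \<epsilon> * measure \<nu> (A i)) / (1 - \<epsilon>))"
    have r0: "0 \<le> r i" for i using ge[of "A i"] A e by (auto simp: r_def)
    have s1: "(\<lambda>i. measure (P x) (A i)) sums measure (P x) (\<Union>i. A i)"
      using A Px(2) by (intro measure_UNION) (auto simp: p.emeasure_finite)
    have s2: "(\<lambda>i. measure \<nu> (A i)) sums measure \<nu> (\<Union>i. A i)"
      using A nu(2) by (intro measure_UNION) (auto simp: n.emeasure_finite)
    have "r sums ((measure (P x) (\<Union>i. A i) - \<epsilon> * measure \<nu> (\<Union>i. A i)) / (1 - \<epsilon>))"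
      unfolding r_def by (intro sums_divide sums_diff sums_mult s1 s2)
    hence "(\<Sum>i. ennreal (r i)) = \<mu> (\<Union>i. A i)"
      using r0 by (simp add: suminf_ennreal2 sums_summable sums_unique[symmetric] \<mu>_def)
    thus "(\<Sum>i. \<mu> (A i)) = \<mu> (\<Union>i. A i)" by (simp add: r_def \<mu>_def)
  qed
  have pos: "positive (sets M) \<mu>" by (simp add: positive_def \<mu>_def)
  have em: "emeasure (residual M P \<nu> \<epsilon> x) A = \<mu> A" if "A \<in> sets M" for A
    unfolding Q by (rule emeasure_measure_of_sigma[OF sets.sigma_algebra_axioms pos ca that])
  show ss: "sets (residual M P \<nu> \<epsilon> x) = sets M"
    unfolding Q using sets.space_closed by (simp add: sets.sigma_sets_eq)
  have sp: "space (residual M P \<nu> \<epsilon> x) = space M"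
    unfolding Q using sets.space_closed by simp
  show "prob_space (residual M P \<nu> \<epsilon> x)"
  proof
    have "measure (P x) (space M) = 1" "measure \<nu> (space M) = 1"
      using Px(2) nu(2) p.prob_space n.prob_space sets_eq_imp_space_eq by metis+
    thus "emeasure (residual M P \<nu> \<epsilon> x) (space (residual M P \<nu> \<epsilon> x)) = 1"
      using e by (simp add: sp em \<mu>_def)
  qed
  fix A assume A: "A \<in> sets M"
  have "ennreal (1 - \<epsilon>) * \<mu> A + ennreal \<epsilon> * emeasure \<nu> A
      = ennreal ((1 - \<epsilon>) * ((measure (P x) A - \<epsilon> * measure \<nu> A) / (1 - \<epsilon>)) + \<epsilon> * measure \<nu> A)"
    using e ge[OF A] apply (simp add: \<mu>_def n.emeasure_eq_measure ennreal_mult[symmetric])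
    by (subst ennreal_plus[symmetric]) auto
  also have "\<dots> = emeasure (P x) A" using e by (simp add: p.emeasure_eq_measure)
  finally show "emeasure (P x) A
            = ennreal (1 - \<epsilon>) * emeasure (residual M P \<nu> \<epsilon> x) A + ennreal \<epsilon> * emeasure \<nu> A"
    using em[OF A] by simp
qed


theorem theorem3:
  fixes M :: "'a measure" and P :: "'a \<Rightarrow> 'a measure" and \<nu> :: "'a measure"
    and C :: "'a set" and \<epsilon> :: real
    and W0 :: "'a \<Rightarrow> real" and \<phi>0 :: "real \<Rightarrow> real" and b0 :: real and lam :: real
  assumes kernel: "P \<in> M \<rightarrow>\<^sub>M prob_algebra M"
    and C_meas: "C \<in> sets M"
    and eps_pos: "\<epsilon> > 0" and eps_le1: "\<epsilon> \<le> 1"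
    and nu_prob: "prob_space \<nu>" and nu_sets: "sets \<nu> = sets M"
    and minor: "\<forall>x\<in>C. \<forall>A\<in>sets M. emeasure (P x) A \<ge> ennreal \<epsilon> * emeasure \<nu> A"
    and W0_meas: "W0 \<in> borel_measurable M"
    and W0_ge1: "\<forall>x\<in>space M. W0 x \<ge> 1"
    and phi0_C: "classC \<phi>0"
    and drift: "\<forall>x\<in>space M.
        (\<integral>\<^sup>+ y. ennreal (W0 y) \<partial>P x) \<le> ennreal (W0 x - \<phi>0 (W0 x) + b0 * indicator C x)"
    and phi_d0: "\<phi>0 (Inf (W0 ` (space M - C))) > b0"
    and lam_pos: "0 < lam"
    and lam_lt: "lam < 1 - b0 / \<phi>0 (Inf (W0 ` (space M - C)))"
  shows
    "(\<forall>x\<in>space M. \<forall>x'\<in>space M. (x, x') \<notin> C \<times> C \<longrightarrow>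
        (\<integral>\<^sup>+ z. ennreal (W0 (fst z) + W0 (snd z) - 1) \<partial>coupling_kernel M P \<nu> \<epsilon> C (x, x'))
          \<le> ennreal ((W0 x + W0 x' - 1) - lam * \<phi>0 (W0 x + W0 x' - 1)))
     \<and> (\<epsilon> < 1 \<longrightarrow> (\<forall>x\<in>C. \<forall>x'\<in>C.
        (\<integral>\<^sup>+ z. ennreal (W0 (fst z) + W0 (snd z) - 1) \<partial>coupling_kernel M P \<nu> \<epsilon> C (x, x')) + 1
          \<le> ennreal (2 / (1 - \<epsilon>)) *
              ((SUP y\<in>C. \<integral>\<^sup>+ u. ennreal (W0 u) \<partial>P y) - ennreal \<epsilon> * (\<integral>\<^sup>+ u. ennreal (W0 u) \<partial>\<nu>))))"
proof -
  have cc: "concave_on {1..} \<phi>0" and lim: "filterlim \<phi>0 at_top at_top"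
    and phipos: "\<And>v. v \<ge> 1 \<Longrightarrow> \<phi>0 v > 0"
    using phi0_C by (auto simp: classC_def)
  have mono: "\<And>u v. 1 \<le> u \<Longrightarrow> u \<le> v \<Longrightarrow> \<phi>0 u \<le> \<phi>0 v"
    using concave_mono[OF cc lim] by blast
  have subadd: "\<And>a b. 1 \<le> a \<Longrightarrow> 1 \<le> b \<Longrightarrow> \<phi>0 (a + b - 1) + \<phi>0 1 \<le> \<phi>0 a + \<phi>0 b"
    using concave_subadd[OF cc] by blast
  have Pk: "prob_space (P x)" "sets (P x) = sets M" if "x \<in> space M" for x
    using measurable_space[OF kernel that] by (auto simp: space_prob_algebra)
  have spP: "space (P x) = space M" if "x \<in> space M" for x
    using Pk(2)[OF that] sets_eq_imp_space_eq by blast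
  define I where "I = (\<lambda>x. \<integral>\<^sup>+ u. ennreal (W0 u) \<partial>P x)"
  have Wm: "(\<lambda>u. ennreal (W0 u)) \<in> borel_measurable M" using W0_meas by simp
  have I_ge: "ennreal s \<le> I x" if "x \<in> space M" "\<forall>u\<in>space M. s \<le> W0 u" for s x
  proof -
    interpret prob_space "P x" using Pk[OF that(1)] by simp
    have "ennreal s = (\<integral>\<^sup>+ u. ennreal s \<partial>P x)" by (simp add: emeasure_space_1)
    also have "\<dots> \<le> I x" unfolding I_def
      using that spP[OF that(1)] by (intro nn_integral_mono) (auto intro: ennreal_leI)
    finally show ?thesis .
  qed
  have ennle: "s \<le> t" if "ennreal s \<le> ennreal t" "0 < s" for s t :: real
  proof (cases "0 \<le> t")
    case True thus ?thesis using that by (simp add: ennreal_le_iff)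
  next
    case False
    hence "ennreal t = 0" by (simp add: ennreal_eq_0_iff)
    thus ?thesis using that by simp
  qed
  define d0 where "d0 = Inf (W0 ` (space M - C))"
  show ?thesis
  proof (intro conjI ballI impI)
    fix x x' assume x: "x \<in> space M" and x': "x' \<in> space M" and nC: "(x, x') \<notin> C \<times> C"
    have ne: "space M - C \<noteq> {}" using x x' nC by auto
    have bdd: "bdd_below (W0 ` (space M - C))" using W0_ge1 by (auto intro!: bdd_belowI[of _ 1])
    have d1: "1 \<le> d0" unfolding d0_def using ne W0_ge1 by (auto intro!: cInf_greatest)
    have dle: "d0 \<le> W0 y" if "y \<in> space M - C" for y
      unfolding d0_def using bdd that by (auto intro!: cInf_lower)
    have phid: "0 < \<phi>0 d0" using phipos d1 by simp
    have b0nn: "0 \<le> b0"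
    proof (rule ccontr)
      assume nb: "\<not> 0 \<le> b0"
      define s where "s = Inf (W0 ` space M)"
      have bdd': "bdd_below (W0 ` space M)" using W0_ge1 by (auto intro!: bdd_belowI[of _ 1])
      have s1: "1 \<le> s" unfolding s_def using x W0_ge1 by (auto intro!: cInf_greatest)
      have sle: "\<forall>u\<in>space M. s \<le> W0 u" unfolding s_def using bdd' by (auto intro!: cInf_lower)
      have "s \<le> W0 y - \<phi>0 1" if y: "y \<in> space M" for y
      proof -
        have "ennreal s \<le> I y" using I_ge[OF y sle] .
        also have "\<dots> \<le> ennreal (W0 y - \<phi>0 (W0 y) + b0 * indicator C y)"
          using drift y by (simp add: I_def)
        also have "\<dots> \<le> ennreal (W0 y - \<phi>0 1)"
          using mono[of 1 "W0 y"] W0_ge1 y nb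
          by (intro ennreal_leI) (auto simp: indicator_def)
        finally show ?thesis using ennle s1 by simp
      qed
      hence "s + \<phi>0 1 \<le> s" unfolding s_def using x
        by (intro cInf_greatest) (auto simp: s_def[symmetric] algebra_simps)
      thus False using phipos[of 1] by simp
    qed
    have "b0 + lam * \<phi>0 d0 < \<phi>0 d0" using lam_lt phid unfolding d0_def[symmetric] by (simp add: field_simps)
    hence "lam * \<phi>0 d0 < 1 * \<phi>0 d0" using b0nn by simp
    hence lam1: "lam \<le> 1" using phid mult_less_cancel_right_pos by fastforce
    have lamd: "b0 < (1 - lam) * \<phi>0 d0" using lam_lt phid unfolding d0_def[symmetric]
      by (simp add: field_simps)
    define a where "a = W0 x"
    define b where "b = W0 x'"
    have a1: "1 \<le> a" and b1: "1 \<le> b" using W0_ge1 x x' by (auto simp: a_def b_def)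
    define r where "r = (\<lambda>y. W0 y - \<phi>0 (W0 y) + b0 * indicator C y)"
    have Ir: "I y \<le> ennreal (r y)" if "y \<in> space M" for y using drift that by (simp add: I_def r_def)
    have r1: "1 \<le> r y" if "y \<in> space M" for y
    proof -
      have "ennreal 1 \<le> I y" using I_ge[OF that, of 1] W0_ge1 by blast
      hence "ennreal 1 \<le> ennreal (r y)" using Ir[OF that] by (rule order_trans)
      thus ?thesis using ennle by simp
    qed
    have ck: "coupling_kernel M P \<nu> \<epsilon> C (x, x') = P x \<Otimes>\<^sub>M P x'"
      using nC by (auto simp: coupling_kernel_def)
    have real: "r x + r x' - 1 \<le> (a + b - 1) - lam * \<phi>0 (a + b - 1)"
    proof -
      have sa: "\<phi>0 (a + b - 1) \<le> \<phi>0 a + \<phi>0 b" using subadd[OF a1 b1] phipos[of 1] by simp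
      have pa: "0 < \<phi>0 a" "0 < \<phi>0 b" "0 < \<phi>0 (a + b - 1)" using phipos a1 b1 by auto
      consider "x \<notin> C" "x' \<notin> C" | "x \<notin> C" "x' \<in> C" | "x \<in> C" "x' \<notin> C" using nC by auto
      thus ?thesis
      proof cases
        case 1
        have "lam * \<phi>0 (a + b - 1) \<le> \<phi>0 (a + b - 1)" using lam1 pa by (simp add: mult_left_le_one_le)
        thus ?thesis using 1 sa by (simp add: r_def a_def b_def)
      next
        case 2
        have "\<phi>0 d0 \<le> \<phi>0 a" using mono d1 dle 2 x by (simp add: a_def)
        hence "b0 < (1 - lam) * \<phi>0 a" using lamd lam1 by (smt (verit) mult_left_mono)
        moreover have "lam * \<phi>0 (a + b - 1) \<le> lam * \<phi>0 a + lam * \<phi>0 b"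
          using sa lam_pos by (simp add: distrib_left[symmetric])
        moreover have "lam * \<phi>0 b \<le> \<phi>0 b" using lam1 pa by (simp add: mult_left_le_one_le)
        ultimately show ?thesis using 2 by (simp add: r_def a_def b_def algebra_simps)
      next
        case 3
        have "\<phi>0 d0 \<le> \<phi>0 b" using mono d1 dle 3 x' by (simp add: b_def)
        hence "b0 < (1 - lam) * \<phi>0 b" using lamd lam1 by (smt (verit) mult_left_mono)
        moreover have "lam * \<phi>0 (a + b - 1) \<le> lam * \<phi>0 a + lam * \<phi>0 b"
          using sa lam_pos by (simp add: distrib_left[symmetric])
        moreover have "lam * \<phi>0 a \<le> \<phi>0 a" using lam1 pa by (simp add: mult_left_le_one_le)
        ultimately show ?thesis using 3 by (simp add: r_def a_def b_def algebra_simps)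
      qed
    qed
    define R where "R = (a + b - 1) - lam * \<phi>0 (a + b - 1)"
    have R1: "1 \<le> R" using real r1[OF x] r1[OF x'] by (simp add: R_def)
    have "(\<integral>\<^sup>+ z. ennreal (W0 (fst z) + W0 (snd z) - 1) \<partial>coupling_kernel M P \<nu> \<epsilon> C (x, x')) + 1
        = I x + I x'"
      unfolding ck I_def using prod_integral[OF Pk[OF x] Pk[OF x'] W0_meas W0_ge1] by simp
    also have "\<dots> \<le> ennreal (r x) + ennreal (r x')" using Ir x x' by (intro add_mono) auto
    also have "\<dots> = ennreal (r x + r x')" using r1[OF x] r1[OF x'] by (subst ennreal_plus) auto
    also have "\<dots> \<le> ennreal (R + 1)" using real by (intro ennreal_leI) (simp add: R_def)
    also have "\<dots> = ennreal R + 1" using R1 by (simp add: ennreal_plus)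
    finally show "(\<integral>\<^sup>+ z. ennreal (W0 (fst z) + W0 (snd z) - 1) \<partial>coupling_kernel M P \<nu> \<epsilon> C (x, x'))
          \<le> ennreal ((W0 x + W0 x' - 1) - lam * \<phi>0 (W0 x + W0 x' - 1))"
      by (simp add: R_def a_def b_def)
  next
    fix x x' assume e1: "\<epsilon> < 1" and x: "x \<in> C" and x': "x' \<in> C"
    have Csp: "C \<subseteq> space M" using C_meas sets.sets_into_space by blast
    define Q where "Q = residual M P \<nu> \<epsilon>"
    define S where "S = (SUP y\<in>C. \<integral>\<^sup>+ u. ennreal (W0 u) \<partial>P y)"
    define n where "n = (\<integral>\<^sup>+ u. ennreal (W0 u) \<partial>\<nu>)"
    have ck: "coupling_kernel M P \<nu> \<epsilon> C (x, x') = Q x \<Otimes>\<^sub>M Q x'"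
      using x x' by (simp add: coupling_kernel_def Q_def)
    have RP: "sets (Q y) = sets M" "prob_space (Q y)"
      "\<And>A. A \<in> sets M \<Longrightarrow> emeasure (P y) A = ennreal (1 - \<epsilon>) * emeasure (Q y) A + ennreal \<epsilon> * emeasure \<nu> A"
      if y: "y \<in> C" for y
    proof -
      have ys: "y \<in> space M" using y Csp by auto
      have mi: "\<forall>A\<in>sets M. emeasure (P y) A \<ge> ennreal \<epsilon> * emeasure \<nu> A" using minor y by auto
      note R = residual_props[where P=P and x=y and M=M and \<nu>=\<nu> and \<epsilon>=\<epsilon>,
          OF Pk(1)[OF ys] Pk(2)[OF ys] nu_prob nu_sets eps_pos e1 mi]
      show "sets (Q y) = sets M" "prob_space (Q y)" using R unfolding Q_def by auto
      show "\<And>A. A \<in> sets M \<Longrightarrow> emeasure (P y) A = ennreal (1 - \<epsilon>) * emeasure (Q y) A + ennreal \<epsilon> * emeasure \<nu> A"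
        using R unfolding Q_def by auto
    qed
    have qle: "(\<integral>\<^sup>+ u. ennreal (W0 u) \<partial>Q y) \<le> ennreal (1 / (1 - \<epsilon>)) * (S - ennreal \<epsilon> * n)"
      if y: "y \<in> C" for y
    proof -
      define q where "q = (\<integral>\<^sup>+ u. ennreal (W0 u) \<partial>Q y)"
      have "I y = ennreal (1 - \<epsilon>) * q + ennreal \<epsilon> * n"
        unfolding I_def q_def n_def
        by (rule mix_integral[OF Pk(2) RP(1) nu_sets RP(3) Wm]) (use y Csp in auto)
      moreover have "I y \<le> S" unfolding S_def I_def using y by (auto intro: SUP_upper)
      ultimately have "ennreal (1 - \<epsilon>) * q \<le> S - ennreal \<epsilon> * n"
        by (simp add: ennreal_le_minus_iff)
      hence "ennreal (1 / (1 - \<epsilon>)) * (ennreal (1 - \<epsilon>) * q) \<le> ennreal (1 / (1 - \<epsilon>)) * (S - ennreal \<epsilon> * n)"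
        by (rule mult_left_mono) simp
      moreover have "ennreal (1 / (1 - \<epsilon>)) * (ennreal (1 - \<epsilon>) * q) = q"
        using e1 by (simp add: mult.assoc[symmetric] ennreal_mult[symmetric])
      ultimately show ?thesis by (simp add: q_def)
    qed
    have "(\<integral>\<^sup>+ z. ennreal (W0 (fst z) + W0 (snd z) - 1) \<partial>coupling_kernel M P \<nu> \<epsilon> C (x, x')) + 1
        = (\<integral>\<^sup>+ u. ennreal (W0 u) \<partial>Q x) + (\<integral>\<^sup>+ u. ennreal (W0 u) \<partial>Q x')"
      unfolding ck using prod_integral[OF RP(2,1)[OF x] RP(2,1)[OF x'] W0_meas W0_ge1] by simp
    also have "\<dots> \<le> ennreal (1 / (1 - \<epsilon>)) * (S - ennreal \<epsilon> * n) + ennreal (1 / (1 - \<epsilon>)) * (S - ennreal \<epsilon> * n)"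
      using qle x x' by (intro add_mono) auto
    also have "\<dots> = ennreal (2 / (1 - \<epsilon>)) * (S - ennreal \<epsilon> * n)"
    proof -
      have "ennreal (2 / (1 - \<epsilon>)) = ennreal (1 / (1 - \<epsilon>)) + ennreal (1 / (1 - \<epsilon>))"
        using e1 by (subst ennreal_plus[symmetric]) auto
      thus ?thesis by (simp add: distrib_right)
    qed
    finally show "(\<integral>\<^sup>+ z. ennreal (W0 (fst z) + W0 (snd z) - 1) \<partial>coupling_kernel M P \<nu> \<epsilon> C (x, x')) + 1
          \<le> ennreal (2 / (1 - \<epsilon>)) *
              ((SUP y\<in>C. \<integral>\<^sup>+ u. ennreal (W0 u) \<partial>P y) - ennreal \<epsilon> * (\<integral>\<^sup>+ u. ennreal (W0 u) \<partial>\<nu>))"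
      by (simp add: S_def n_def)
  qed
qed

end
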